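(* Let $\mathcal{A}\subseteq\mathbb{R}^3$ be measurable with finite positive measure, $k_0,\eta>0$, and for $k\in\{1,2\}$ let $\mathsf{G}_k\in L^2(\mathcal{A})$ with $\mathsf{g}_k=\int_{\mathcal{A}}|\mathsf{G}_k|^2>0$, $\mathsf{H}_k=\frac{\mathrm{j}k_0\eta}{\sqrt{4\pi}}\mathsf{G}_k$, $A_{\mathsf{u},k}>0$, $\sigma_k>0$, $\hat{\mathsf{H}}_k=\frac{\sqrt{A_{\mathsf{u},k}}}{\sigma_k}\mathsf{H}_k$, and let $\rho=\frac{\int_{\mathcal{A}}\mathsf{G}_1^*\mathsf{G}_2}{\sqrt{\mathsf{g}_1\mathsf{g}_2}}$. Let $\mathsf{P}>0$ and let $\mathsf{J}_{\mathsf{dl},1},\mathsf{J}_{\mathsf{dl},2}\in L^2(\mathcal{A})$ satisfy $\sum_{k=1}^2\int_{\mathcal{A}}|\mathsf{J}_{\mathsf{dl},k}|^2\le\mathsf{P}$. Define $$\mathsf{P}_2=\frac{|\int_{\mathcal{A}}\hat{\mathsf{H}}_2\mathsf{J}_{\mathsf{dl},2}|^2}{\int_{\mathcal{A}}|\hat{\mathsf{H}}_2|^2\,\big(1+|\int_{\mathcal{A}}\hat{\mathsf{H}}_2\mathsf{J}_{\mathsf{dl},1}|^2\big)},\qquad \mathsf{P}_1=\frac{|\int_{\mathcal{A}}\hat{\mathsf{H}}_1\mathsf{J}_{\mathsf{dl},1}|^2}{\int_{\mathcal{A}}|\hat{\mathsf{H}}_1|^2-\frac{\mathsf{P}_2|\int_{\mathcal{A}}\hat{\mathsf{H}}_1^*\hat{\mathsf{H}}_2|^2}{1+\mathsf{P}_2\int_{\mathcal{A}}|\hat{\mathsf{H}}_2|^2}},$$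 and $\overline{\gamma}_{k}=\frac{A_{\mathsf{u},k}k_0^2\eta^2}{4\pi\sigma_k^2}\mathsf{P}_k$. Then the dual uplink sum-rate with this power allocation (SIC order $1\rightarrow2$), $$\log_2\!\Big(1+\overline{\gamma}_1\mathsf{g}_1\Big(1-\tfrac{\overline{\gamma}_2\mathsf{g}_2|\rho|^2}{1+\overline{\gamma}_2\mathsf{g}_2}\Big)\Big)+\log_2(1+\overline{\gamma}_2\mathsf{g}_2),$$ equals the downlink sum-rate under dirty-paper coding with order $2\rightarrow1$, $$\log_2\Big(1+\Big|\int_{\mathcal{A}}\hat{\mathsf{H}}_1\mathsf{J}_{\mathsf{dl},1}\Big|^2\Big)+\log_2\Big(1+\frac{|\int_{\mathcal{A}}\hat{\mathsf{H}}_2\mathsf{J}_{\mathsf{dl},2}|^2}{1+|\int_{\mathcal{A}}\hat{\mathsf{H}}_2\mathsf{J}_{\mathsf{dl},1}|^2}\Big),$$ and $\mathsf{P}_1+\mathsf{P}_2\le\sum_{k=1}^2\int_{\mathcal{A}}|\mathsf{J}_{\mathsf{dl},k}|^2\le\mathsf{P}$.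
   Context: Integrals without variable are over $\mathbf{r}\in\mathcal{A}$. In the paper $\mathcal{A}$ is the base-station continuous aperture, $\mathsf{G}_k(\mathbf{r})=\frac{e^{-\mathrm{j}k_0\|\mathbf{r}-\mathbf{s}_k\|}}{\sqrt{4\pi}\|\mathbf{r}-\mathbf{s}_k\|}\sqrt{\frac{|\mathbf{e}^{\mathsf{T}}(\mathbf{s}_k-\mathbf{r})|}{\|\mathbf{r}-\mathbf{s}_k\|}}$ (user locations $\mathbf{s}_k\notin\overline{\mathcal{A}}$, aperture normal $\mathbf{e}$), $\mathsf{J}_{\mathsf{dl},k}$ are downlink source current distributions, $A_{\mathsf{u},k}$ user apertures and $\sigma_k^2$ noise intensities. *)

theory Defs
  imports "HOL-Analysis.Analysis"
begin

definition aint :: "(real^3) set \<Rightarrow> (real^3 \<Rightarrow> complex) \<Rightarrow> complex" where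
  "aint A f = (LINT r:A|lborel. f r)"

definition L2_on :: "(real^3) set \<Rightarrow> (real^3 \<Rightarrow> complex) \<Rightarrow> bool" where
  "L2_on A f \<longleftrightarrow> (\<lambda>r. indicator A r *\<^sub>R f r) \<in> borel_measurable lborel
      \<and> set_integrable lborel A (\<lambda>r. (cmod (f r))^2)"

definition nrm2 :: "(real^3) set \<Rightarrow> (real^3 \<Rightarrow> complex) \<Rightarrow> real" where
  "nrm2 A f = (LINT r:A|lborel. (cmod (f r))^2)"

end

theory Submission
  imports Defs
begin


definition L2M :: "'a measure \<Rightarrow> ('a \<Rightarrow> complex) \<Rightarrow> bool" where
  "L2M M u \<longleftrightarrow> u \<in> borel_measurable M \<and> integrable M (\<lambda>x. (cmod (u x))^2)"

definition ip :: "'a measure \<Rightarrow> ('a \<Rightarrow> complex) \<Rightarrow> ('a \<Rightarrow> complex) \<Rightarrow> complex" where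
  "ip M u w = (LINT x|M. u x * cnj (w x))"

definition nn :: "'a measure \<Rightarrow> ('a \<Rightarrow> complex) \<Rightarrow> real" where
  "nn M u = (LINT x|M. (cmod (u x))^2)"

lemma cnj_meas[measurable]: "f \<in> borel_measurable M \<Longrightarrow> (\<lambda>x. cnj (f x)) \<in> borel_measurable M"
  by (rule borel_measurable_continuous_on[where f=cnj]) (auto intro: continuous_on_cnj continuous_on_id)

lemma sq_bound2: "((p::real) + q)^2 \<le> 2*p^2 + 2*q^2"
  using zero_le_square[of "p-q"] by (simp add: power2_eq_square algebra_simps)

lemma prod_bound: "0 \<le> (p::real) \<Longrightarrow> 0 \<le> q \<Longrightarrow> p * q \<le> p^2 + q^2"
proof -
  assume a: "0 \<le> p" "0 \<le> q"
  have "0 \<le> (p-q)^2" by simp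
  then have "2*(p*q) \<le> p^2+q^2" by (simp add: power2_eq_square algebra_simps)
  moreover have "0 \<le> p*q" using a by simp
  ultimately show ?thesis by linarith
qed

lemma L2_prod_int:
  assumes "L2M M u" "L2M M w"
  shows "integrable M (\<lambda>x. u x * cnj (w x))"
proof (rule Bochner_Integration.integrable_bound[where f="\<lambda>x. (cmod (u x))^2 + (cmod (w x))^2"])
  show "integrable M (\<lambda>x. (cmod (u x))^2 + (cmod (w x))^2)"
    using assms unfolding L2M_def by auto
  show "(\<lambda>x. u x * cnj (w x)) \<in> borel_measurable M"
  proof -
    have [measurable]: "u \<in> borel_measurable M" "w \<in> borel_measurable M" using assms unfolding L2M_def by auto
    show ?thesis by measurable
  qed
  show "AE x in M. norm (u x * cnj (w x)) \<le> norm ((cmod (u x))^2 + (cmod (w x))^2)"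
  proof (intro AE_I2)
    fix x
    have "cmod (u x) * cmod (w x) \<le> (cmod (u x))^2 + (cmod (w x))^2"
      using prod_bound[of "cmod (u x)" "cmod (w x)"] by simp
    then show "norm (u x * cnj (w x)) \<le> norm ((cmod (u x))^2 + (cmod (w x))^2)"
      by (simp add: norm_mult)
  qed
qed

lemma L2_lin:
  assumes "L2M M u" "L2M M w"
  shows "L2M M (\<lambda>x. u x + c * w x)"
proof -
  have [measurable]: "u \<in> borel_measurable M" "w \<in> borel_measurable M" using assms unfolding L2M_def by auto
  have m: "(\<lambda>x. u x + c * w x) \<in> borel_measurable M"
    by measurable
  have "integrable M (\<lambda>x. 2 * (cmod (u x))^2 + 2 * (cmod c)^2 * (cmod (w x))^2)"
    using assms unfolding L2M_def by auto
  then have "integrable M (\<lambda>x. (cmod (u x + c * w x))^2)"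
  proof (rule Bochner_Integration.integrable_bound)
    show "(\<lambda>x. (cmod (u x + c * w x))\<^sup>2) \<in> borel_measurable M" using m by measurable
    show "AE x in M. norm ((cmod (u x + c * w x))\<^sup>2) \<le> norm (2 * (cmod (u x))\<^sup>2 + 2 * (cmod c)\<^sup>2 * (cmod (w x))\<^sup>2)"
    proof (intro AE_I2)
      fix x
      have a: "cmod (u x + c * w x) \<le> cmod (u x) + cmod c * cmod (w x)"
        by (metis norm_mult norm_triangle_ineq)
      have "(cmod (u x + c * w x))^2 \<le> (cmod (u x) + cmod c * cmod (w x))^2"
        using a by (simp add: power_mono)
      also have "\<dots> \<le> 2 * (cmod (u x))\<^sup>2 + 2 * (cmod c)\<^sup>2 * (cmod (w x))\<^sup>2"
        using sq_bound2[of "cmod (u x)" "cmod c * cmod (w x)"] by (simp add: power_mult_distrib)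
      finally show "norm ((cmod (u x + c * w x))\<^sup>2) \<le> norm (2 * (cmod (u x))\<^sup>2 + 2 * (cmod c)\<^sup>2 * (cmod (w x))\<^sup>2)"
        by simp
    qed
  qed
  then show ?thesis using m unfolding L2M_def by auto
qed

lemma ip_lin_left:
  assumes "L2M M u" "L2M M w" "L2M M e"
  shows "ip M (\<lambda>x. u x + c * w x) e = ip M u e + c * ip M w e"
proof -
  have "ip M (\<lambda>x. u x + c * w x) e = (LINT x|M. u x * cnj (e x) + c * (w x * cnj (e x)))"
    unfolding ip_def by (simp add: algebra_simps)
  also have "\<dots> = ip M u e + c * ip M w e"
    unfolding ip_def using L2_prod_int[OF assms(1,3)] L2_prod_int[OF assms(2,3)] by simp
  finally show ?thesis .
qed

lemma ip_sym: "ip M w u = cnj (ip M u w)"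
proof -
  have "cnj (ip M u w) = (LINT x|M. cnj (u x * cnj (w x)))"
    unfolding ip_def by (rule Bochner_Integration.integral_cnj[symmetric])
  then show ?thesis unfolding ip_def by (simp add: mult.commute)
qed

lemma ip_self: "ip M u u = complex_of_real (nn M u)"
proof -
  have "\<And>x. u x * cnj (u x) = complex_of_real ((cmod (u x))^2)" by (rule complex_norm_square[symmetric])
  then show ?thesis unfolding ip_def nn_def by (simp only: integral_complex_of_real)
qed

lemma nn_nonneg: "0 \<le> nn M u"
  unfolding nn_def by (rule integral_nonneg_AE) auto

lemma nn_comb:
  assumes u: "L2M M u" and w: "L2M M w"
  shows "nn M (\<lambda>x. u x + a * w x) = nn M u + 2 * Re (cnj a * ip M u w) + (cmod a)^2 * nn M w"
proof -
  define v where "v = (\<lambda>x. u x + a * w x)"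
  have v: "L2M M v" unfolding v_def by (rule L2_lin[OF u w])
  have "complex_of_real (nn M v) = ip M v v" by (simp add: ip_self)
  also have "\<dots> = ip M u v + a * ip M w v" unfolding v_def by (rule ip_lin_left[OF u w v[unfolded v_def]])
  also have "ip M u v = cnj (ip M v u)" by (simp add: ip_sym[of M u v])
  also have "ip M v u = ip M u u + a * ip M w u" unfolding v_def by (rule ip_lin_left[OF u w u])
  also have "ip M w v = cnj (ip M v w)" by (simp add: ip_sym[of M w v])
  also have "ip M v w = ip M u w + a * ip M w w" unfolding v_def by (rule ip_lin_left[OF u w w])
  finally have "complex_of_real (nn M v) = cnj (ip M u u + a * ip M w u) + a * cnj (ip M u w + a * ip M w w)" .
  then have "nn M v = Re (cnj (ip M u u + a * ip M w u) + a * cnj (ip M u w + a * ip M w w))"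
    by (metis Re_complex_of_real)
  also have "\<dots> = nn M u + 2 * Re (cnj a * ip M u w) + (cmod a)^2 * nn M w"
    unfolding cmod_power2 by (simp add: ip_self ip_sym[of M w u] power2_eq_square algebra_simps)
  finally show ?thesis unfolding v_def .
qed

lemma quad_real:
  fixes U K W :: real
  assumes K: "0 \<le> K" and W: "0 \<le> W" and q: "\<And>s. 0 \<le> U - 2 * s * K + s^2 * K * W"
  shows "K \<le> U * W"
proof (cases "W = 0")
  case True
  show ?thesis
  proof (rule ccontr)
    assume "\<not> K \<le> U * W"
    then have Kp: "0 < K" using True by simp
    have "0 \<le> U - 2 * ((U+1)/(2*K)) * K" using q[of "(U+1)/(2*K)"] True by simp
    also have "\<dots> = -1" using Kp by (simp add: field_simps)
    finally show False by simp
  qed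
next
  case False
  then have Wp: "0 < W" using W by simp
  have "0 \<le> U - 2 * (1/W) * K + (1/W)^2 * K * W" by (rule q)
  also have "\<dots> = U - K / W" using Wp by (simp add: field_simps power2_eq_square)
  finally show ?thesis using Wp by (simp add: field_simps)
qed

lemma CS:
  assumes u: "L2M M u" and w: "L2M M w"
  shows "(cmod (ip M u w))^2 \<le> nn M u * nn M w"
proof (rule quad_real)
  show "0 \<le> (cmod (ip M u w))^2" by simp
  show "0 \<le> nn M w" by (rule nn_nonneg)
  fix s :: real
  have "0 \<le> nn M (\<lambda>x. u x + (- (complex_of_real s * ip M u w)) * w x)" by (rule nn_nonneg)
  also have "\<dots> = nn M u + 2 * Re (cnj (- (complex_of_real s * ip M u w)) * ip M u w)
      + (cmod (- (complex_of_real s * ip M u w)))^2 * nn M w"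
    by (rule nn_comb[OF u w])
  also have "\<dots> = nn M u - 2 * s * (cmod (ip M u w))^2 + s^2 * (cmod (ip M u w))^2 * nn M w"
    unfolding cmod_power2 by (simp add: power2_eq_square algebra_simps)
  finally show "0 \<le> nn M u - 2 * s * (cmod (ip M u w))^2 + s^2 * (cmod (ip M u w))^2 * nn M w" .
qed

lemma real_CSM:
  fixes X V E t p q :: real
  assumes "0 \<le> X" "X^2 \<le> V * E" "0 \<le> V" "0 \<le> E" "0 \<le> t" "0 \<le> p" "0 \<le> q"
  shows "(X + t * p * q)^2 \<le> (V + t * p^2) * (E + t * q^2)"
proof -
  have "(2*X*p*q)^2 = 4 * X^2 * (p^2*q^2)" by (simp add: power2_eq_square)
  also have "\<dots> \<le> 4 * (V*E) * (p^2*q^2)" using assms by (intro mult_right_mono mult_left_mono) auto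
  also have "\<dots> \<le> (V*q^2 + E*p^2)^2"
    using zero_le_square[of "V*q^2 - E*p^2"] by (simp add: power2_eq_square algebra_simps)
  finally have "2*X*p*q \<le> V*q^2 + E*p^2"
    by (rule power2_le_imp_le) (use assms in simp)
  then have "t*(2*X*p*q) \<le> t*(V*q^2 + E*p^2)" using assms by (intro mult_left_mono) auto
  then show ?thesis using assms(2) by (simp add: power2_eq_square algebra_simps)
qed

lemma CS_M:
  assumes v: "L2M M v" and e: "L2M M e" and g: "L2M M g" and t: "0 \<le> t"
  shows "(cmod (ip M v e + complex_of_real t * ip M v g * ip M g e))^2
     \<le> (nn M v + t * (cmod (ip M v g))^2) * (nn M e + t * (cmod (ip M g e))^2)"
proof -
  have X: "(cmod (ip M v e))^2 \<le> nn M v * nn M e" by (rule CS[OF v e])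
  have "cmod (ip M v e + complex_of_real t * ip M v g * ip M g e) \<le> cmod (ip M v e) + t * cmod (ip M v g) * cmod (ip M g e)"
    using t by (metis (no_types, opaque_lifting) abs_of_nonneg norm_mult norm_of_real norm_triangle_ineq)
  then have "(cmod (ip M v e + complex_of_real t * ip M v g * ip M g e))^2 \<le> (cmod (ip M v e) + t * cmod (ip M v g) * cmod (ip M g e))^2"
    by (simp add: power_mono)
  also have "\<dots> \<le> (nn M v + t * (cmod (ip M v g))^2) * (nn M e + t * (cmod (ip M g e))^2)"
    by (rule real_CSM) (use X t nn_nonneg in auto)
  finally show ?thesis .
qed

lemma key:
  assumes f: "L2M M f" and g: "L2M M g" and e: "L2M M e" and t: "0 \<le> t"
  shows "(cmod (ip M f e))^2 * (1 + t * nn M g)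
     \<le> (nn M e + t * (cmod (ip M g e))^2) * (nn M f * (1 + t * nn M g) - t * (cmod (ip M f g))^2)"
proof -
  define G where "G = nn M g"
  define d where "d = 1 + t * G"
  have G0: "0 \<le> G" unfolding G_def by (rule nn_nonneg)
  have d0: "0 < d" unfolding d_def using G0 t by (simp add: add_pos_nonneg)
  define c where "c = ip M f g"
  define a where "a = - (complex_of_real (t / d) * c)"
  define v where "v = (\<lambda>x. f x + a * g x)"
  have v: "L2M M v" unfolding v_def by (rule L2_lin[OF f g])
  have ipvg: "ip M v g = c / complex_of_real d"
  proof -
    have "ip M v g = c + a * complex_of_real G" unfolding v_def c_def G_def
      by (simp add: ip_lin_left[OF f g g] ip_self)
    also have "\<dots> = c * complex_of_real (1 - t * G / d)"
      unfolding a_def by (simp add: algebra_simps)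
    also have "1 - t * G / d = 1 / d" using d0 unfolding d_def by (simp add: field_simps)
    also have "c * complex_of_real (1 / d) = c / complex_of_real d" by (simp add: divide_inverse of_real_inverse)
    finally show ?thesis .
  qed
  have ipve: "ip M v e = ip M f e + a * ip M g e" unfolding v_def by (rule ip_lin_left[OF f g e])
  have sum: "ip M v e + complex_of_real t * ip M v g * ip M g e = ip M f e"
    unfolding ipve ipvg a_def using d0 by (simp add: field_simps)
  have nnv: "nn M v = nn M f + 2 * Re (cnj a * c) + (cmod a)^2 * G"
    unfolding v_def c_def G_def by (rule nn_comb[OF f g])
  have ca: "cnj a * c = - complex_of_real (t / d * (cmod c)^2)"
    unfolding a_def using complex_norm_square[of c] by (simp add: mult.commute)
  have ma: "(cmod a)^2 = (t/d)^2 * (cmod c)^2"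
    unfolding a_def using t d0 by (simp only: norm_minus_cancel norm_mult norm_of_real power_mult_distrib abs_of_nonneg divide_nonneg_pos)
  have "nn M v + t * (cmod (ip M v g))^2 = nn M f - t * (cmod c)^2 / d"
  proof -
    have "nn M v + t * (cmod (ip M v g))^2 = nn M f - 2 * (t / d * (cmod c)^2) + (t/d)^2 * (cmod c)^2 * G + t * (cmod c)^2 / d^2"
      unfolding nnv ca ma ipvg using d0 by (simp add: norm_divide power_divide)
    also have "\<dots> = nn M f - 2 * (t / d * (cmod c)^2) + t * (cmod c)^2 * (t * G + 1) / d^2"
      using d0 by (simp add: field_simps power2_eq_square)
    also have "t * G + 1 = d" unfolding d_def by simp
    also have "nn M f - 2 * (t / d * (cmod c)^2) + t * (cmod c)^2 * d / d^2 = nn M f - t * (cmod c)^2 / d"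
      using d0 by (simp add: field_simps power2_eq_square)
    finally show ?thesis .
  qed
  with CS_M[OF v e g t] sum have
    "(cmod (ip M f e))^2 \<le> (nn M f - t * (cmod c)^2 / d) * (nn M e + t * (cmod (ip M g e))^2)"
    by simp
  then have "(cmod (ip M f e))^2 * d \<le> (nn M f - t * (cmod c)^2 / d) * (nn M e + t * (cmod (ip M g e))^2) * d"
    using d0 by (simp add: mult_right_mono)
  also have "\<dots> = (nn M e + t * (cmod (ip M g e))^2) * (nn M f * d - t * (cmod c)^2)"
    using d0 by (simp add: field_simps)
  finally show ?thesis unfolding d_def G_def c_def .
qed



lemma alg_main:
  fixes m1 m2 g1 g2 h1 h2 x y z C CG P1 P2 gb1 gb2 R a b :: real
  assumes m1: "0 < m1" and m2: "0 < m2" and g1: "0 < g1" and g2: "0 < g2"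
    and h1: "h1 = m1 * g1" and h2: "h2 = m2 * g2"
    and x: "0 \<le> x" and y: "0 \<le> y" and z: "0 \<le> z" and CG: "0 \<le> CG"
    and C: "C = m1 * m2 * CG" and Cle: "C \<le> h1 * h2"
    and P2: "P2 = y / (h2 * (1 + z))"
    and P1: "P1 = x / (h1 - P2 * C / (1 + P2 * h2))"
    and gb1: "gb1 = m1 * P1" and gb2: "gb2 = m2 * P2"
    and R: "R = CG / (g1 * g2)"
    and a: "0 \<le> a" and b: "0 \<le> b"
    and yb: "y \<le> h2 * b"
    and keyi: "x * (1 + P2 * h2) \<le> (a + P2 * z) * (h1 * (1 + P2 * h2) - P2 * C)"
  shows "log 2 (1 + gb1 * g1 * (1 - gb2 * g2 * R / (1 + gb2 * g2))) + log 2 (1 + gb2 * g2)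
         = log 2 (1 + x) + log 2 (1 + y / (1 + z))
       \<and> P1 + P2 \<le> a + b"
proof -
  have h1p: "0 < h1" and h2p: "0 < h2" using h1 h2 m1 m2 g1 g2 by auto
  have P2n: "0 \<le> P2" unfolding P2 using y z h2p by simp
  have e: "1 + P2 * h2 > 0" using P2n h2p by (simp add: add_pos_nonneg)
  define D where "D = h1 - P2 * C / (1 + P2 * h2)"
  have "P2 * C / (1 + P2 * h2) \<le> P2 * (h1 * h2) / (1 + P2 * h2)"
    using Cle P2n e by (intro divide_right_mono mult_left_mono) auto
  also have "\<dots> < h1" using e h1p h2p P2n by (simp add: field_simps)
  finally have Dp: "0 < D" unfolding D_def by simp
  have zz: "1 + z \<noteq> 0" using z by simp
  have gb2g2: "gb2 * g2 = y / (1 + z)"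
  proof -
    have nz: "m2 * g2 \<noteq> 0" using m2 g2 by simp
    have "gb2 * g2 = (m2 * g2) * y / ((m2 * g2) * (1 + z))" unfolding gb2 P2 h2 by simp
    also have "\<dots> = y / (1 + z)" using nz by (rule mult_divide_mult_cancel_left)
    finally show ?thesis .
  qed
  have RC: "gb2 * g2 * R = P2 * C / h1"
    unfolding gb2 R C h1 h2 using m1 m2 g1 g2 by (simp add: field_simps)
  have "gb1 * g1 * (1 - gb2 * g2 * R / (1 + gb2 * g2)) = P1 * (h1 - P2 * C / (1 + P2 * h2))"
  proof -
    have "gb2 * g2 = P2 * h2" unfolding gb2 h2 by simp
    then have "gb1 * g1 * (1 - gb2 * g2 * R / (1 + gb2 * g2)) = P1 * h1 * (1 - P2 * C / h1 / (1 + P2 * h2))"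
      using RC unfolding gb1 h1 by simp
    also have "\<dots> = P1 * (h1 - P2 * C / (1 + P2 * h2))"
    proof -
      have "\<And>E. E \<noteq> 0 \<Longrightarrow> P1 * h1 * (1 - P2 * C / h1 / E) = P1 * (h1 - P2 * C / E)"
        using h1p by (simp add: field_simps)
      then show ?thesis using e by simp
    qed
    finally show ?thesis .
  qed
  also have "\<dots> = x" unfolding P1 using Dp unfolding D_def by simp
  finally have eq1: "gb1 * g1 * (1 - gb2 * g2 * R / (1 + gb2 * g2)) = x" .
  have part1: "log 2 (1 + gb1 * g1 * (1 - gb2 * g2 * R / (1 + gb2 * g2))) + log 2 (1 + gb2 * g2)
         = log 2 (1 + x) + log 2 (1 + y / (1 + z))"
    using eq1 gb2g2 by simp
  have "x * (1 + P2 * h2) \<le> (a + P2 * z) * (D * (1 + P2 * h2))"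
  proof -
    have "\<And>E. E \<noteq> 0 \<Longrightarrow> (h1 - P2 * C / E) * E = h1 * E - P2 * C"
      by (simp add: field_simps)
    then have "D * (1 + P2 * h2) = h1 * (1 + P2 * h2) - P2 * C" unfolding D_def using e by simp
    then show ?thesis using keyi by simp
  qed
  then have "x \<le> (a + P2 * z) * D" using e by (simp add: mult.assoc[symmetric])
  then have P1le: "P1 \<le> a + P2 * z" unfolding P1 using Dp unfolding D_def[symmetric]
    by (simp add: divide_le_eq mult.commute)
  have "P2 * (1 + z) = y / h2" 
  proof -
    have "\<And>E. E \<noteq> 0 \<Longrightarrow> y / (h2 * E) * E = y / h2" using h2p by (simp add: field_simps)
    then show ?thesis unfolding P2 using zz by simp
  qed
  also have "\<dots> \<le> b" using yb h2p by (simp add: divide_le_eq mult.commute)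
  finally have "P2 * (1 + z) \<le> b" .
  then have "P1 + P2 \<le> a + b" using P1le by (simp add: algebra_simps)
  with part1 show ?thesis by simp
qed


lemma L2_zero: "L2M M (\<lambda>x. 0)" unfolding L2M_def by simp

lemma L2_scale: "L2M M u \<Longrightarrow> L2M M (\<lambda>x. c * u x)"
  using L2_lin[OF L2_zero, of M u c] by simp

lemma L2_cnj: "L2M M u \<Longrightarrow> L2M M (\<lambda>x. cnj (u x))"
  unfolding L2M_def by (auto intro: cnj_meas)

lemma nn_cnj: "nn M (\<lambda>x. cnj (u x)) = nn M u"
  unfolding nn_def by simp

lemma L2_transfer:
  assumes "L2_on A u" shows "L2M lborel (\<lambda>r. indicator A r *\<^sub>R u r)"
proof -
  have "\<And>r. (cmod (indicator A r *\<^sub>R u r))^2 = indicator A r *\<^sub>R (cmod (u r))^2"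
    by (auto simp: indicator_def)
  then show ?thesis using assms unfolding L2_on_def L2M_def set_integrable_def by simp
qed

lemma aint_transfer:
  "aint A (\<lambda>r. u r * w r) = ip lborel (\<lambda>r. indicator A r *\<^sub>R u r) (\<lambda>r. cnj (indicator A r *\<^sub>R w r))"
proof -
  have "(\<lambda>r. indicator A r *\<^sub>R (u r * w r)) = (\<lambda>r. (indicator A r *\<^sub>R u r) * cnj (cnj (indicator A r *\<^sub>R w r)))"
    by (rule ext) (simp add: indicator_def)
  then show ?thesis unfolding aint_def ip_def set_lebesgue_integral_def by (rule arg_cong)
qed

lemma aint_transfer2:
  "aint A (\<lambda>r. cnj (u r) * w r) = ip lborel (\<lambda>r. indicator A r *\<^sub>R w r) (\<lambda>r. indicator A r *\<^sub>R u r)"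
proof -
  have "(\<lambda>r. indicator A r *\<^sub>R (cnj (u r) * w r)) = (\<lambda>r. (indicator A r *\<^sub>R w r) * cnj (indicator A r *\<^sub>R u r))"
    by (rule ext) (simp add: indicator_def)
  then show ?thesis unfolding aint_def ip_def set_lebesgue_integral_def by (rule arg_cong)
qed

lemma nrm2_transfer: "nrm2 A u = nn lborel (\<lambda>r. indicator A r *\<^sub>R u r)"
proof -
  have "(\<lambda>r. indicator A r *\<^sub>R (cmod (u r))^2) = (\<lambda>r. (cmod (indicator A r *\<^sub>R u r))^2)"
    by (rule ext) (simp add: indicator_def)
  then show ?thesis unfolding nrm2_def nn_def set_lebesgue_integral_def by (rule arg_cong)
qed

lemma aint_scale: "aint A (\<lambda>r. c * f r) = c * aint A f"
proof -
  have "(\<lambda>r. indicator A r *\<^sub>R (c * f r)) = (\<lambda>r. c * (indicator A r *\<^sub>R f r))"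
    by (rule ext) (simp add: indicator_def)
  then have "(LINT r|lborel. indicator A r *\<^sub>R (c * f r)) = (LINT r|lborel. c * (indicator A r *\<^sub>R f r))"
    by (rule arg_cong)
  also have "\<dots> = c * (LINT r|lborel. indicator A r *\<^sub>R f r)" by (rule integral_mult_right_zero)
  finally show ?thesis unfolding aint_def set_lebesgue_integral_def .
qed

lemma nrm2_scale: "nrm2 A (\<lambda>r. c * f r) = (cmod c)^2 * nrm2 A f"
proof -
  have "(\<lambda>r. indicator A r *\<^sub>R (cmod (c * f r))^2) = (\<lambda>r. (cmod c)^2 * (indicator A r *\<^sub>R (cmod (f r))^2))"
    by (rule ext) (simp add: indicator_def norm_mult power_mult_distrib)
  then have "(LINT r|lborel. indicator A r *\<^sub>R (cmod (c * f r))^2) = (LINT r|lborel. (cmod c)^2 * (indicator A r *\<^sub>R (cmod (f r))^2))"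
    by (rule arg_cong)
  also have "\<dots> = (cmod c)^2 * (LINT r|lborel. indicator A r *\<^sub>R (cmod (f r))^2)" by (rule integral_mult_right_zero)
  finally show ?thesis unfolding nrm2_def set_lebesgue_integral_def .
qed

lemma L2_on_scale: "L2_on A u \<Longrightarrow> L2M lborel (\<lambda>r. indicator A r *\<^sub>R (c * u r))"
proof -
  assume "L2_on A u"
  then have "L2M lborel (\<lambda>r. c * (indicator A r *\<^sub>R u r))" by (intro L2_scale L2_transfer)
  moreover have "(\<lambda>r. c * (indicator A r *\<^sub>R u r)) = (\<lambda>r. indicator A r *\<^sub>R (c * u r))"
    by (auto simp: indicator_def)
  ultimately show ?thesis by simp
qed


theorem theorem4:
  fixes A :: "(real^3) set"
    and k0 \<eta> Au1 Au2 \<sigma>1 \<sigma>2 P :: real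
    and G1 G2 J1 J2 H1 H2 Hh1 Hh2 :: "real^3 \<Rightarrow> complex"
    and g1 g2 P1 P2 gb1 gb2 :: real and \<rho> :: complex
  assumes A_meas: "A \<in> sets lborel"
    and A_pos: "0 < emeasure lborel A" and A_fin: "emeasure lborel A < \<infinity>"
    and k0_pos: "0 < k0" and eta_pos: "0 < \<eta>"
    and G1_L2: "L2_on A G1" and G2_L2: "L2_on A G2"
    and g1_pos: "0 < nrm2 A G1" and g2_pos: "0 < nrm2 A G2"
    and Au1_pos: "0 < Au1" and Au2_pos: "0 < Au2"
    and s1_pos: "0 < \<sigma>1" and s2_pos: "0 < \<sigma>2"
    and P_pos: "0 < P"
    and J1_L2: "L2_on A J1" and J2_L2: "L2_on A J2"
    and power: "nrm2 A J1 + nrm2 A J2 \<le> P"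
    and g1_def: "g1 = nrm2 A G1" and g2_def: "g2 = nrm2 A G2"
    and H1_def: "H1 = (\<lambda>r. (\<i> * complex_of_real (k0 * \<eta> / sqrt (4 * pi))) * G1 r)"
    and H2_def: "H2 = (\<lambda>r. (\<i> * complex_of_real (k0 * \<eta> / sqrt (4 * pi))) * G2 r)"
    and Hh1_def: "Hh1 = (\<lambda>r. complex_of_real (sqrt Au1 / \<sigma>1) * H1 r)"
    and Hh2_def: "Hh2 = (\<lambda>r. complex_of_real (sqrt Au2 / \<sigma>2) * H2 r)"
    and rho_def: "\<rho> = aint A (\<lambda>r. cnj (G1 r) * G2 r) / complex_of_real (sqrt (g1 * g2))"
    and P2_def: "P2 = (cmod (aint A (\<lambda>r. Hh2 r * J2 r)))^2 /
              (nrm2 A Hh2 * (1 + (cmod (aint A (\<lambda>r. Hh2 r * J1 r)))^2))"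
    and P1_def: "P1 = (cmod (aint A (\<lambda>r. Hh1 r * J1 r)))^2 /
              (nrm2 A Hh1 - P2 * (cmod (aint A (\<lambda>r. cnj (Hh1 r) * Hh2 r)))^2
                               / (1 + P2 * nrm2 A Hh2))"
    and gb1_def: "gb1 = Au1 * k0^2 * \<eta>^2 / (4 * pi * \<sigma>1^2) * P1"
    and gb2_def: "gb2 = Au2 * k0^2 * \<eta>^2 / (4 * pi * \<sigma>2^2) * P2"
  shows "log 2 (1 + gb1 * g1 * (1 - gb2 * g2 * (cmod \<rho>)^2 / (1 + gb2 * g2)))
           + log 2 (1 + gb2 * g2)
         = log 2 (1 + (cmod (aint A (\<lambda>r. Hh1 r * J1 r)))^2)
           + log 2 (1 + (cmod (aint A (\<lambda>r. Hh2 r * J2 r)))^2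
                        / (1 + (cmod (aint A (\<lambda>r. Hh2 r * J1 r)))^2))
       \<and> P1 + P2 \<le> nrm2 A J1 + nrm2 A J2
       \<and> nrm2 A J1 + nrm2 A J2 \<le> P"
  
proof -
  define \<kappa> where "\<kappa> = k0 * \<eta> / sqrt (4 * pi)"
  define C1 where "C1 = complex_of_real (sqrt Au1 / \<sigma>1) * (\<i> * complex_of_real \<kappa>)"
  define C2 where "C2 = complex_of_real (sqrt Au2 / \<sigma>2) * (\<i> * complex_of_real \<kappa>)"
  define m1 where "m1 = Au1 * k0^2 * \<eta>^2 / (4 * pi * \<sigma>1^2)"
  define m2 where "m2 = Au2 * k0^2 * \<eta>^2 / (4 * pi * \<sigma>2^2)"
  have Hh1: "Hh1 = (\<lambda>r. C1 * G1 r)" unfolding Hh1_def H1_def C1_def \<kappa>_def by (simp add: mult.assoc)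
  have Hh2: "Hh2 = (\<lambda>r. C2 * G2 r)" unfolding Hh2_def H2_def C2_def \<kappa>_def by (simp add: mult.assoc)
  have k2: "\<kappa>^2 = k0^2 * \<eta>^2 / (4 * pi)" unfolding \<kappa>_def by (simp add: power_divide power_mult_distrib)
  have mC1: "(cmod C1)^2 = m1"
  proof -
    have "cmod C1 = (sqrt Au1 / \<sigma>1) * \<bar>\<kappa>\<bar>" unfolding C1_def
      using Au1_pos s1_pos by (simp only: norm_mult norm_of_real norm_ii) simp
    then have "(cmod C1)^2 = (sqrt Au1)^2 / \<sigma>1^2 * \<kappa>^2" by (simp add: power_mult_distrib power_divide)
    then show ?thesis unfolding m1_def k2 using Au1_pos by (simp add: mult_ac)
  qed
  have mC2: "(cmod C2)^2 = m2"
  proof -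
    have "cmod C2 = (sqrt Au2 / \<sigma>2) * \<bar>\<kappa>\<bar>" unfolding C2_def
      using Au2_pos s2_pos by (simp only: norm_mult norm_of_real norm_ii) simp
    then have "(cmod C2)^2 = (sqrt Au2)^2 / \<sigma>2^2 * \<kappa>^2" by (simp add: power_mult_distrib power_divide)
    then show ?thesis unfolding m2_def k2 using Au2_pos by (simp add: mult_ac)
  qed
  have m1p: "0 < m1" unfolding m1_def using Au1_pos k0_pos eta_pos s1_pos by simp
  have m2p: "0 < m2" unfolding m2_def using Au2_pos k0_pos eta_pos s2_pos by simp
  define h1 where "h1 = nrm2 A Hh1"
  define h2 where "h2 = nrm2 A Hh2"
  have h1: "h1 = m1 * g1" unfolding h1_def Hh1 nrm2_scale mC1 g1_def ..
  have h2: "h2 = m2 * g2" unfolding h2_def Hh2 nrm2_scale mC2 g2_def ..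
  define x where "x = (cmod (aint A (\<lambda>r. Hh1 r * J1 r)))^2"
  define y where "y = (cmod (aint A (\<lambda>r. Hh2 r * J2 r)))^2"
  define z where "z = (cmod (aint A (\<lambda>r. Hh2 r * J1 r)))^2"
  define CG where "CG = (cmod (aint A (\<lambda>r. cnj (G1 r) * G2 r)))^2"
  define C where "C = (cmod (aint A (\<lambda>r. cnj (Hh1 r) * Hh2 r)))^2"
  have C: "C = m1 * m2 * CG"
  proof -
    have "aint A (\<lambda>r. cnj (Hh1 r) * Hh2 r) = (cnj C1 * C2) * aint A (\<lambda>r. cnj (G1 r) * G2 r)"
      unfolding Hh1 Hh2 by (simp add: aint_scale[symmetric] mult_ac)
    then show ?thesis unfolding C_def CG_def
      by (simp add: norm_mult power_mult_distrib mC1 mC2)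
  qed
  define f where "f = (\<lambda>r. indicator A r *\<^sub>R Hh1 r)"
  define g where "g = (\<lambda>r. indicator A r *\<^sub>R Hh2 r)"
  define e1 where "e1 = (\<lambda>r. cnj (indicator A r *\<^sub>R J1 r))"
  define e2 where "e2 = (\<lambda>r. cnj (indicator A r *\<^sub>R J2 r))"
  have f: "L2M lborel f" unfolding f_def Hh1 by (rule L2_on_scale[OF G1_L2])
  have g: "L2M lborel g" unfolding g_def Hh2 by (rule L2_on_scale[OF G2_L2])
  have e1: "L2M lborel e1" unfolding e1_def by (intro L2_cnj L2_transfer J1_L2)
  have e2: "L2M lborel e2" unfolding e2_def by (intro L2_cnj L2_transfer J2_L2)
  have nf: "nn lborel f = h1" unfolding f_def h1_def nrm2_transfer ..
  have ng: "nn lborel g = h2" unfolding g_def h2_def nrm2_transfer ..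
  have ne1: "nn lborel e1 = nrm2 A J1" unfolding e1_def nrm2_transfer nn_cnj ..
  have ne2: "nn lborel e2 = nrm2 A J2" unfolding e2_def nrm2_transfer nn_cnj ..
  have xi: "x = (cmod (ip lborel f e1))^2" unfolding x_def f_def e1_def aint_transfer ..
  have yi: "y = (cmod (ip lborel g e2))^2" unfolding y_def g_def e2_def aint_transfer ..
  have zi: "z = (cmod (ip lborel g e1))^2" unfolding z_def g_def e1_def aint_transfer ..
  have Ci: "C = (cmod (ip lborel f g))^2"
    unfolding C_def aint_transfer2 f_def[symmetric] g_def[symmetric] ip_sym[of lborel g f] by simp
  have Cle: "C \<le> h1 * h2" unfolding Ci using CS[OF f g] nf ng by simp
  have yb: "y \<le> h2 * nrm2 A J2" unfolding yi using CS[OF g e2] ng ne2 by simp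
  have g1p: "0 < g1" and g2p: "0 < g2" using g1_pos g2_pos g1_def g2_def by auto
  have h2p: "0 < h2" using h2 m2p g2p by simp
  have P2: "P2 = y / (h2 * (1 + z))" unfolding P2_def y_def z_def h2_def ..
  have P2n: "0 \<le> P2" unfolding P2 using h2p by (simp add: y_def z_def)
  have keyi: "x * (1 + P2 * h2) \<le> (nrm2 A J1 + P2 * z) * (h1 * (1 + P2 * h2) - P2 * C)"
    using key[OF f g e1 P2n] unfolding xi zi Ci nf ng ne1 by (simp add: mult.commute)
  have R: "(cmod \<rho>)^2 = CG / (g1 * g2)"
    unfolding rho_def CG_def using g1p g2p
    by (simp add: norm_divide power_divide)
  have main: "log 2 (1 + gb1 * g1 * (1 - gb2 * g2 * (cmod \<rho>)^2 / (1 + gb2 * g2))) + log 2 (1 + gb2 * g2)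
         = log 2 (1 + x) + log 2 (1 + y / (1 + z))
       \<and> P1 + P2 \<le> nrm2 A J1 + nrm2 A J2"
  proof (rule alg_main[OF m1p m2p g1p g2p h1 h2 _ _ _ _ C Cle P2 _ _ _ R _ _ yb keyi])
    show "0 \<le> x" "0 \<le> y" "0 \<le> z" "0 \<le> CG" unfolding x_def y_def z_def CG_def by simp_all
    show "P1 = x / (h1 - P2 * C / (1 + P2 * h2))" unfolding P1_def x_def h1_def h2_def C_def ..
    show "gb1 = m1 * P1" unfolding gb1_def m1_def ..
    show "gb2 = m2 * P2" unfolding gb2_def m2_def ..
    show "0 \<le> nrm2 A J1" "0 \<le> nrm2 A J2" unfolding nrm2_transfer by (simp_all add: nn_nonneg)
  qed
  show ?thesis using main power unfolding x_def y_def z_def by simp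
qed

end
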